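(* If a graph $G$ contains a bad attachment $\Gamma$ with $V(\Gamma)\ne V(G)$, then $G\notin\mathcal{S}_3$.
   Context: Graphs may have parallel edges but no loops. A bad attachment of $G$ is an induced subgraph $\Gamma$ with $3\le|V(\Gamma)|\le 6$ such that the number of edges of $G$ between $V(\Gamma)$ and $V(G)\setminus V(\Gamma)$ is at most $3|V(\Gamma)|-|E(\Gamma)|$. $G\in\mathcal{S}_3$ means: for every $\beta:V(G)\to\mathbb{Z}_3$ with $\sum_v\beta(v)\equiv0\pmod3$ there is a strongly-connected orientation $D$ of $G$ with $d^+_D(v)-d^-_D(v)\equiv\beta(v)\pmod3$ for all $v$. *)

theory Defs
  imports Main
begin

text \<open>A finite loopless multigraph: vertex set V, edge set E (edges are abstract
  objects, so parallel edges are allowed), and ends e = the pair of endpoints.\<close>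
definition multigraph :: "'v set \<Rightarrow> 'e set \<Rightarrow> ('e \<Rightarrow> 'v \<times> 'v) \<Rightarrow> bool" where
  "multigraph V E ends \<longleftrightarrow> finite V \<and> finite E \<and>
     (\<forall>e\<in>E. fst (ends e) \<in> V \<and> snd (ends e) \<in> V \<and> fst (ends e) \<noteq> snd (ends e))"

definition inner_edges :: "'e set \<Rightarrow> ('e \<Rightarrow> 'v \<times> 'v) \<Rightarrow> 'v set \<Rightarrow> 'e set" where
  "inner_edges E ends S = {e\<in>E. fst (ends e) \<in> S \<and> snd (ends e) \<in> S}"

definition cut_edges :: "'e set \<Rightarrow> ('e \<Rightarrow> 'v \<times> 'v) \<Rightarrow> 'v set \<Rightarrow> 'e set" where
  "cut_edges E ends S = {e\<in>E. (fst (ends e) \<in> S) \<noteq> (snd (ends e) \<in> S)}"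

text \<open>S is the vertex set of a bad attachment (the induced subgraph on S).\<close>
definition bad_attachment :: "'v set \<Rightarrow> 'e set \<Rightarrow> ('e \<Rightarrow> 'v \<times> 'v) \<Rightarrow> 'v set \<Rightarrow> bool" where
  "bad_attachment V E ends S \<longleftrightarrow> S \<subseteq> V \<and> 3 \<le> card S \<and> card S \<le> 6 \<and>
     int (card (cut_edges E ends S)) \<le> 3 * int (card S) - int (card (inner_edges E ends S))"

text \<open>An orientation is D :: 'e \<Rightarrow> bool; D e = True orients e from fst (ends e)
  to snd (ends e), otherwise in the reverse direction.\<close>
definition arc :: "('e \<Rightarrow> 'v \<times> 'v) \<Rightarrow> ('e \<Rightarrow> bool) \<Rightarrow> 'e \<Rightarrow> 'v \<times> 'v" where
  "arc ends D e = (if D e then ends e else prod.swap (ends e))"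

definition outdeg :: "'e set \<Rightarrow> ('e \<Rightarrow> 'v \<times> 'v) \<Rightarrow> ('e \<Rightarrow> bool) \<Rightarrow> 'v \<Rightarrow> nat" where
  "outdeg E ends D v = card {e\<in>E. fst (arc ends D e) = v}"

definition indeg :: "'e set \<Rightarrow> ('e \<Rightarrow> 'v \<times> 'v) \<Rightarrow> ('e \<Rightarrow> bool) \<Rightarrow> 'v \<Rightarrow> nat" where
  "indeg E ends D v = card {e\<in>E. snd (arc ends D e) = v}"

definition strongly_connected_orient ::
  "'v set \<Rightarrow> 'e set \<Rightarrow> ('e \<Rightarrow> 'v \<times> 'v) \<Rightarrow> ('e \<Rightarrow> bool) \<Rightarrow> bool" where
  "strongly_connected_orient V E ends D \<longleftrightarrow>
     (\<forall>u\<in>V. \<forall>v\<in>V. (u, v) \<in> (arc ends D ` E)\<^sup>*)"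

text \<open>Membership in S_3; Z_3-valued beta represented by integers modulo 3.\<close>
definition in_S3 :: "'v set \<Rightarrow> 'e set \<Rightarrow> ('e \<Rightarrow> 'v \<times> 'v) \<Rightarrow> bool" where
  "in_S3 V E ends \<longleftrightarrow>
     (\<forall>\<beta> :: 'v \<Rightarrow> int. (\<Sum>v\<in>V. \<beta> v) mod 3 = 0 \<longrightarrow>
        (\<exists>D. strongly_connected_orient V E ends D \<and>
             (\<forall>v\<in>V. (int (outdeg E ends D v) - int (indeg E ends D v)) mod 3 = \<beta> v mod 3)))"

end

theory Submission
  imports Defs
begin

lemma sum_card_fibers:
  assumes "finite E" "finite S"
  shows "(\<Sum>v\<in>S. card {e\<in>E. f e = v}) = card {e\<in>E. f e \<in> S}"
proof -
  have "{e\<in>E. f e \<in> S} = (\<Union>v\<in>S. {e\<in>E. f e = v})" by auto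
  moreover have "card (\<Union>v\<in>S. {e\<in>E. f e = v}) = (\<Sum>v\<in>S. card {e\<in>E. f e = v})"
    by (subst card_UN_disjoint) (use assms in auto)
  ultimately show ?thesis by simp
qed

lemma rtrancl_cross:
  assumes "(a, b) \<in> R\<^sup>*" "a \<notin> S" "b \<in> S"
  shows "\<exists>x y. (x, y) \<in> R \<and> x \<notin> S \<and> y \<in> S"
  using assms by (induction rule: rtrancl_induct) auto

lemma out_plus_in:
  assumes "finite E"
  shows "outdeg E ends D v + indeg E ends D v =
     card {e\<in>E. fst (ends e) = v} + card {e\<in>E. snd (ends e) = v}"
proof -
  have o: "outdeg E ends D v = card {e\<in>E. D e \<and> fst (ends e) = v} + card {e\<in>E. \<not> D e \<and> snd (ends e) = v}"
    unfolding outdeg_def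
    by (subst card_Un_disjoint[symmetric]) (use assms in \<open>auto intro!: arg_cong[where f=card] simp: arc_def\<close>)
  have i: "indeg E ends D v = card {e\<in>E. D e \<and> snd (ends e) = v} + card {e\<in>E. \<not> D e \<and> fst (ends e) = v}"
    unfolding indeg_def
    by (subst card_Un_disjoint[symmetric]) (use assms in \<open>auto intro!: arg_cong[where f=card] simp: arc_def\<close>)
  have f: "card {e\<in>E. fst (ends e) = v} = card {e\<in>E. D e \<and> fst (ends e) = v} + card {e\<in>E. \<not> D e \<and> fst (ends e) = v}"
    by (subst card_Un_disjoint[symmetric]) (use assms in \<open>auto intro!: arg_cong[where f=card]\<close>)
  have s: "card {e\<in>E. snd (ends e) = v} = card {e\<in>E. D e \<and> snd (ends e) = v} + card {e\<in>E. \<not> D e \<and> snd (ends e) = v}"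
    by (subst card_Un_disjoint[symmetric]) (use assms in \<open>auto intro!: arg_cong[where f=card]\<close>)
  show ?thesis using o i f s by simp
qed

lemma mod3_aux:
  fixes a b :: int
  assumes "(a - b) mod 3 = (- (a + b)) mod 3"
  shows "a mod 3 = 0"
  using assms by presburger

lemma mod3_pos:
  fixes n :: nat
  assumes "int n mod 3 = 0" "n \<noteq> 0"
  shows "3 \<le> n"
  using assms by presburger

theorem mainTheorem8:
  fixes V :: "'v set" and E :: "'e set" and ends :: "'e \<Rightarrow> 'v \<times> 'v" and S :: "'v set"
  assumes "multigraph V E ends"
    and "bad_attachment V E ends S"
    and "S \<noteq> V"
  shows "\<not> in_S3 V E ends"
proof
  assume S3: "in_S3 V E ends"
  have finV: "finite V" and finE: "finite E" using assms(1) by (auto simp: multigraph_def)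
  have SV: "S \<subseteq> V" and k3: "3 \<le> card S"
    and bad: "int (card (cut_edges E ends S)) \<le> 3 * int (card S) - int (card (inner_edges E ends S))"
    using assms(2) by (auto simp: bad_attachment_def)
  have finS: "finite S" using SV finV finite_subset by blast
  obtain w where w: "w \<in> V" "w \<notin> S" using SV assms(3) by blast
  have "S \<noteq> {}" using k3 by auto
  then obtain s where s: "s \<in> S" by blast
  define dg where "dg v = int (card {e\<in>E. fst (ends e) = v}) + int (card {e\<in>E. snd (ends e) = v})" for v
  define \<beta> where "\<beta> v = (if v \<in> S then - dg v else if v = w then (\<Sum>u\<in>S. dg u) else 0)" for v
  have "(\<Sum>v\<in>V. \<beta> v) = (\<Sum>v\<in>S. \<beta> v) + (\<Sum>v\<in>V - S. \<beta> v)"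
    using SV finV by (metis sum.subset_diff add.commute)
  also have "(\<Sum>v\<in>S. \<beta> v) = - (\<Sum>u\<in>S. dg u)"
    by (simp add: \<beta>_def sum_negf)
  also have "(\<Sum>v\<in>V - S. \<beta> v) = (\<Sum>v\<in>V - S. if v = w then (\<Sum>u\<in>S. dg u) else 0)"
    by (rule sum.cong) (auto simp: \<beta>_def)
  also have "\<dots> = (\<Sum>u\<in>S. dg u)"
    using w finV by (simp add: sum.delta)
  finally have "(\<Sum>v\<in>V. \<beta> v) = 0" by simp
  hence "(\<Sum>v\<in>V. \<beta> v) mod 3 = 0" by simp
  then obtain D where sc: "strongly_connected_orient V E ends D"
    and bD: "\<forall>v\<in>V. (int (outdeg E ends D v) - int (indeg E ends D v)) mod 3 = \<beta> v mod 3"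
    using S3[unfolded in_S3_def, rule_format, of \<beta>] by metis
  let ?R = "arc ends D ` E"
  have out3: "3 \<le> outdeg E ends D v" if v: "v \<in> S" for v
  proof -
    have vV: "v \<in> V" using v SV by auto
    have m: "(int (outdeg E ends D v) - int (indeg E ends D v)) mod 3 = (- dg v) mod 3"
      using bD vV v by (simp add: \<beta>_def)
    have "outdeg E ends D v + indeg E ends D v = card {e\<in>E. fst (ends e) = v} + card {e\<in>E. snd (ends e) = v}"
      using out_plus_in[OF finE] .
    hence dgv: "dg v = int (outdeg E ends D v) + int (indeg E ends D v)"
      unfolding dg_def by linarith
    have m0: "int (outdeg E ends D v) mod 3 = 0"
      using m unfolding dgv by (rule mod3_aux)
    have "(v, w) \<in> ?R\<^sup>*" using sc vV w unfolding strongly_connected_orient_def by blast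
    moreover have "v \<noteq> w" using v w by auto
    ultimately obtain x where "(v, x) \<in> ?R" by (metis converse_rtranclE)
    then obtain e where e: "e \<in> E" "arc ends D e = (v, x)" by (metis imageE)
    hence e2: "fst (arc ends D e) = v" by simp
    have mem: "e \<in> {e\<in>E. fst (arc ends D e) = v}" using e(1) e2 by simp
    have fin: "finite {e\<in>E. fst (arc ends D e) = v}" using finE by (rule finite_subset[rotated]) blast
    have "outdeg E ends D v \<noteq> 0" unfolding outdeg_def using card_0_eq[OF fin] mem by blast
    thus ?thesis by (rule mod3_pos[OF m0])
  qed
  have "(w, s) \<in> ?R\<^sup>*" using sc w s SV unfolding strongly_connected_orient_def by blast
  then obtain x y where xy: "(x, y) \<in> ?R" "x \<notin> S" "y \<in> S"
    using rtrancl_cross[of w s ?R S] w s by blast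
  then obtain e0 where e0: "e0 \<in> E" "arc ends D e0 = (x, y)" by (metis imageE)
  have e0c: "e0 \<in> cut_edges E ends S"
  proof (cases "D e0")
    case True
    hence "ends e0 = (x, y)" using e0 by (simp add: arc_def)
    thus ?thesis using e0 xy by (simp add: cut_edges_def)
  next
    case False
    hence "ends e0 = (y, x)" using e0 by (simp add: arc_def prod.swap_def prod_eq_iff)
    thus ?thesis using e0 xy by (simp add: cut_edges_def)
  qed
  have sub: "{e\<in>E. fst (arc ends D e) \<in> S} \<subseteq> (inner_edges E ends S \<union> cut_edges E ends S) - {e0}"
  proof
    fix e assume eS: "e \<in> {e\<in>E. fst (arc ends D e) \<in> S}"
    have ne: "e \<noteq> e0" using eS e0(2) xy(2) by auto
    have "e \<in> inner_edges E ends S \<union> cut_edges E ends S"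
    proof (cases "D e")
      case True
      thus ?thesis using eS by (auto simp: arc_def inner_edges_def cut_edges_def)
    next
      case False
      thus ?thesis using eS by (auto simp: arc_def inner_edges_def cut_edges_def)
    qed
    thus "e \<in> (inner_edges E ends S \<union> cut_edges E ends S) - {e0}" using ne by blast
  qed
  have fin2: "finite (inner_edges E ends S \<union> cut_edges E ends S)"
    using finE unfolding inner_edges_def cut_edges_def by auto
  have "card {e\<in>E. fst (arc ends D e) \<in> S} \<le> card ((inner_edges E ends S \<union> cut_edges E ends S) - {e0})"
    by (rule card_mono[OF fin2[THEN finite_Diff] sub])
  also have "\<dots> = card (inner_edges E ends S \<union> cut_edges E ends S) - 1"
    using e0c fin2 by simp
  also have "\<dots> \<le> card (inner_edges E ends S) + card (cut_edges E ends S) - 1"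
    using card_Un_le[of "inner_edges E ends S" "cut_edges E ends S"] by linarith
  finally have le1: "card {e\<in>E. fst (arc ends D e) \<in> S} \<le> card (inner_edges E ends S) + card (cut_edges E ends S) - 1" .
  have "3 * card S = (\<Sum>v\<in>S. 3)" by simp
  also have "\<dots> \<le> (\<Sum>v\<in>S. outdeg E ends D v)" using out3 by (rule sum_mono)
  also have "\<dots> = card {e\<in>E. fst (arc ends D e) \<in> S}"
    unfolding outdeg_def by (rule sum_card_fibers[OF finE finS])
  finally have "3 * card S \<le> card (inner_edges E ends S) + card (cut_edges E ends S) - 1"
    using le1 by linarith
  moreover have "card (cut_edges E ends S) \<ge> 1"
  proof -
    have "finite (cut_edges E ends S)" using fin2 by simp
    hence "card (cut_edges E ends S) \<noteq> 0" using e0c by auto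
    thus ?thesis by linarith
  qed
  ultimately show False using bad by linarith
qed

end
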